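(* Let $p\ge1$. Assume Assumption A1(p) and Assumption A2 (see context), and let $0<\eta_s\le\eta_{\infty,p}$ for all $s$. Then for every $t\ge1$, \[\mathbb E^{1/p}\big[\|\tilde\theta^{(\mathrm{tr})}_t\|^p\big]\le\exp\Big(-a\sum_{s=1}^t\eta_sH_s\Big)\|\theta_0-\theta_\star\|,\qquad\tilde\theta^{(\mathrm{tr})}_t=\prod_{s=1}^t\Gamma^{\mathrm{avg}}_s(\theta_0-\theta_\star).\]
   Context: Setting: $N$ agents, dimension $d$. For each agent $c$: distribution $\pi_c$ on $(\mathsf Z,\mathcal Z)$, measurable $\mathbf A^c:\mathsf Z\to\mathbb R^{d\times d}$, $\mathbf b^c:\mathsf Z\to\mathbb R^d$, $\bar{\mathbf A}^c=\mathbb E_{\pi_c}[\mathbf A^c(Z)]$, $\bar{\mathbf b}^c=\mathbb E_{\pi_c}[\mathbf b^c(Z)]$; $\theta_\star$ solves $(N^{-1}\sum_c\bar{\mathbf A}^c)\theta_\star=N^{-1}\sum_c\bar{\mathbf b}^c$; $\bar{\mathbf A}^c\theta^c_\star=\bar{\mathbf b}^c$; $\varepsilon^c(z)=(\mathbf A^c(z)-\bar{\mathbf A}^c)\theta^c_\star-(\mathbf b^c(z)-\bar{\mathbf b}^c)$. Assumption A1(p): each $-\bar{\mathbf A}^c$ Hurwitz; there exist $a>0,\eta_{\infty,p}>0$, $\eta_{\infty,p}a\le1/2$, with $\mathbb E^{1/p}_{Z\sim\pi_c}[\|(I-\eta\mathbf A^c(Z))u\|^p]\le(1-\eta a)\|u\|$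 for all $0<\eta<\eta_{\infty,p}$, $u$. Assumption A2: samples $Z^c_{s,h}$ ($1\le h\le H_s$) independent with $Z^c_{s,h}\sim\pi_c$; $\max_c\sup_z\|\varepsilon^c(z)\|<\infty$, $\max_c\sup_z\max(\|\mathbf A^c(z)\|,\|\mathbf A^c(z)-\bar{\mathbf A}^c\|)<\infty$. $H_s\in\mathbb N$; $\Gamma^c_s=(I-\eta_s\mathbf A^c(Z^c_{s,H_s}))\cdots(I-\eta_s\mathbf A^c(Z^c_{s,1}))$, $\Gamma^{\mathrm{avg}}_s=N^{-1}\sum_c\Gamma^c_s$, $\prod_{s=1}^t\Gamma^{\mathrm{avg}}_s=\Gamma^{\mathrm{avg}}_t\cdots\Gamma^{\mathrm{avg}}_1$; $\theta_0\in\mathbb R^d$ fixed. *)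

theory Defs
  imports "HOL-Probability.Probability"
begin

fun ordprod :: "nat \<Rightarrow> (nat \<Rightarrow> real^'d^'d) \<Rightarrow> real^'d^'d" where
  "ordprod 0 f = mat 1"
| "ordprod (Suc n) f = f (Suc n) ** ordprod n f"

definition hurwitz :: "real^'d^'d \<Rightarrow> bool" where
  "hurwitz M \<longleftrightarrow>
     (\<forall>z::complex. det (\<chi> i j. complex_of_real (M $ i $ j) - (if i = j then z else 0)) = 0
        \<longrightarrow> Re z < 0)"

definition Gamma_loc ::
  "(nat \<Rightarrow> real) \<Rightarrow> (nat \<Rightarrow> nat) \<Rightarrow> (nat \<Rightarrow> 'z \<Rightarrow> real^'d^'d)
   \<Rightarrow> (nat \<Rightarrow> nat \<Rightarrow> nat \<Rightarrow> 'w \<Rightarrow> 'z) \<Rightarrow> nat \<Rightarrow> nat \<Rightarrow> 'w \<Rightarrow> real^'d^'d" where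
  "Gamma_loc \<eta> H A Z c s \<omega> = ordprod (H s) (\<lambda>h. mat 1 - \<eta> s *\<^sub>R A c (Z c s h \<omega>))"

definition Gamma_avg ::
  "nat \<Rightarrow> (nat \<Rightarrow> real) \<Rightarrow> (nat \<Rightarrow> nat) \<Rightarrow> (nat \<Rightarrow> 'z \<Rightarrow> real^'d^'d)
   \<Rightarrow> (nat \<Rightarrow> nat \<Rightarrow> nat \<Rightarrow> 'w \<Rightarrow> 'z) \<Rightarrow> nat \<Rightarrow> 'w \<Rightarrow> real^'d^'d" where
  "Gamma_avg N \<eta> H A Z s \<omega> = (1 / real N) *\<^sub>R (\<Sum>c<N. Gamma_loc \<eta> H A Z c s \<omega>)"

end

theory Submission
  imports Defs "HOL-Real_Asymp.Real_Asymp"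
begin

lemma cont_mv: "continuous_on UNIV (\<lambda>z::((real^'n^'m) \<times> (real^'n)). fst z *v snd z)"
  unfolding matrix_vector_mult_def
  by (intro continuous_intros)

lemma cont_mm: "continuous_on UNIV (\<lambda>z::((real^'n^'m) \<times> (real^'k^'n)). fst z ** snd z)"
  unfolding matrix_matrix_mult_def
  by (intro continuous_intros)

lemma meas_mv[measurable (raw)]:
  fixes f :: "'a \<Rightarrow> real^'n^'m" and g :: "'a \<Rightarrow> real^'n"
  assumes "f \<in> borel_measurable M" "g \<in> borel_measurable M"
  shows "(\<lambda>x. f x *v g x) \<in> borel_measurable M"
  using borel_measurable_continuous_Pair[OF assms cont_mv] .

lemma meas_mm[measurable (raw)]:
  fixes f :: "'a \<Rightarrow> real^'n^'m" and g :: "'a \<Rightarrow> real^'k^'n"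
  assumes "f \<in> borel_measurable M" "g \<in> borel_measurable M"
  shows "(\<lambda>x. f x ** g x) \<in> borel_measurable M"
  using borel_measurable_continuous_Pair[OF assms cont_mm] .

lemma norm_mv_le: "norm ((A::real^'n^'m) *v x) \<le> real CARD('m) * norm A * norm x"
proof -
  have "norm (A *v x) \<le> (\<Sum>i\<in>UNIV. \<bar>(A *v x) $ i\<bar>)"
    by (rule norm_le_l1_cart)
  also have "\<dots> \<le> (\<Sum>i::'m\<in>UNIV. norm A * norm x)"
  proof (rule sum_mono)
    fix i
    have "\<bar>(A *v x) $ i\<bar> \<le> norm(A $ i) * norm x"
      by (simp add: matrix_mult_dot Cauchy_Schwarz_ineq2)
    also have "\<dots> \<le> norm A * norm x"
      by (rule mult_right_mono[OF Finite_Cartesian_Product.norm_nth_le]) simp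
    finally show "\<bar>(A *v x) $ i\<bar> \<le> norm A * norm x" .
  qed
  finally show ?thesis by simp
qed

lemma tendsto_mv[tendsto_intros]:
  fixes f :: "'a \<Rightarrow> real^'n^'m" and g :: "'a \<Rightarrow> real^'n"
  assumes "(f \<longlongrightarrow> A) F" "(g \<longlongrightarrow> x) F"
  shows "((\<lambda>n. f n *v g n) \<longlongrightarrow> A *v x) F"
  using continuous_on_tendsto_compose[OF cont_mv tendsto_Pair[OF assms]] by (simp add: o_def)

lemma KL:
  fixes X Y :: "'w \<Rightarrow> 'x" and F :: "'x \<Rightarrow> real^'d" and G :: "'x \<Rightarrow> real^'d^'d"
  assumes M: "prob_space M" and ind: "prob_space.indep_var M S X T Y"
    and Gm: "G \<in> borel_measurable S" and Fm: "F \<in> borel_measurable T"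
    and bnd: "\<And>y. (\<integral>\<^sup>+\<omega>. ennreal (norm (G (X \<omega>) *v y) powr p) \<partial>M) \<le> r * ennreal (norm y powr p)"
  shows "(\<integral>\<^sup>+\<omega>. ennreal (norm (G (X \<omega>) *v F (Y \<omega>)) powr p) \<partial>M) \<le> r * (\<integral>\<^sup>+\<omega>. ennreal (norm (F (Y \<omega>)) powr p) \<partial>M)"
proof -
  interpret prob_space M by (rule M)
  have rvX: "random_variable S X" using ind by (rule indep_var_rv1)
  have rvY: "random_variable T Y" using ind by (rule indep_var_rv2)
  have eq: "distr M S X \<Otimes>\<^sub>M distr M T Y = distr M (S \<Otimes>\<^sub>M T) (\<lambda>x. (X x, Y x))"
    using ind indep_var_distribution_eq by blast
  interpret PX: prob_space "distr M S X" by (rule prob_space_distr) (rule rvX)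
  interpret PY: prob_space "distr M T Y" by (rule prob_space_distr) (rule rvY)
  interpret PXY: pair_sigma_finite "distr M S X" "distr M T Y" ..
  define h where "h = (\<lambda>z::'x \<times> 'x. ennreal (norm (G (fst z) *v F (snd z)) powr p))"
  have hm: "h \<in> borel_measurable (S \<Otimes>\<^sub>M T)"
    unfolding h_def using Gm Fm by measurable
  have hm': "h \<in> borel_measurable (distr M S X \<Otimes>\<^sub>M distr M T Y)"
    using hm by (simp add: eq)
  have "(\<integral>\<^sup>+\<omega>. ennreal (norm (G (X \<omega>) *v F (Y \<omega>)) powr p) \<partial>M) = (\<integral>\<^sup>+\<omega>. h (X \<omega>, Y \<omega>) \<partial>M)"
    by (simp add: h_def)
  also have "\<dots> = (\<integral>\<^sup>+z. h z \<partial>distr M (S \<Otimes>\<^sub>M T) (\<lambda>x. (X x, Y x)))"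
    by (rule nn_integral_distr[symmetric]) (auto intro: measurable_Pair rvX rvY hm)
  also have "\<dots> = (\<integral>\<^sup>+z. h z \<partial>(distr M S X \<Otimes>\<^sub>M distr M T Y))"
    by (simp add: eq)
  also have "\<dots> = (\<integral>\<^sup>+ y. (\<integral>\<^sup>+ x. h (x, y) \<partial>distr M S X) \<partial>distr M T Y)"
    by (rule PXY.nn_integral_snd[symmetric]) (rule hm')
  also have "\<dots> \<le> (\<integral>\<^sup>+ y. r * ennreal (norm (F y) powr p) \<partial>distr M T Y)"
  proof (rule nn_integral_mono)
    fix y
    have "(\<integral>\<^sup>+ x. h (x, y) \<partial>distr M S X) = (\<integral>\<^sup>+\<omega>. h (X \<omega>, y) \<partial>M)"
      unfolding h_def by (rule nn_integral_distr) (auto intro: rvX, use Gm in measurable)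
    also have "\<dots> \<le> r * ennreal (norm (F y) powr p)" using bnd[of "F y"] by (simp add: h_def)
    finally show "(\<integral>\<^sup>+ x. h (x, y) \<partial>distr M S X) \<le> r * ennreal (norm (F y) powr p)" .
  qed
  also have "\<dots> = r * (\<integral>\<^sup>+ y. ennreal (norm (F y) powr p) \<partial>distr M T Y)"
    by (rule nn_integral_cmult) (use Fm in measurable)
  also have "\<dots> = r * (\<integral>\<^sup>+\<omega>. ennreal (norm (F (Y \<omega>)) powr p) \<partial>M)"
    by (subst nn_integral_distr) (auto intro: rvY, use Fm in measurable)
  finally show ?thesis .
qed

lemma step_lt:
  fixes Q :: "'z measure" and B :: "'z \<Rightarrow> real^'d^'d"
  assumes Q: "prob_space Q" and Bm: "B \<in> borel_measurable Q"
    and Bb: "\<And>z. z \<in> space Q \<Longrightarrow> norm (B z) \<le> K"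
    and p: "p \<ge> 1" and eta: "0 < \<eta>" "\<eta> \<le> E" and K0: "K \<ge> 0"
    and le: "(\<integral>z. norm ((mat 1 - \<eta> *\<^sub>R B z) *v u) powr p \<partial>Q) powr (1 / p) \<le> c * norm u"
    and c: "c \<ge> 0"
  shows "(\<integral>\<^sup>+z. ennreal (norm ((mat 1 - \<eta> *\<^sub>R B z) *v u) powr p) \<partial>Q)
           \<le> ennreal (c powr p) * ennreal (norm u powr p)"
proof -
  interpret prob_space Q by (rule Q)
  define f where "f = (\<lambda>z. norm ((mat 1 - \<eta> *\<^sub>R B z) *v u) powr p)"
  have fm: "f \<in> borel_measurable Q" unfolding f_def using Bm by measurable
  define C0 where "C0 = real CARD('d) * (norm (mat 1 :: real^'d^'d) + E * K) * norm u"
  have fb: "norm (f z) \<le> C0 powr p" if z: "z \<in> space Q" for z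
  proof -
    have "norm (mat 1 - \<eta> *\<^sub>R B z) \<le> norm (mat 1 :: real^'d^'d) + \<eta> * norm (B z)"
      using norm_triangle_ineq4[of "mat 1 :: real^'d^'d" "\<eta> *\<^sub>R B z"] eta by simp
    also have "\<dots> \<le> norm (mat 1 :: real^'d^'d) + E * K"
      using Bb[OF z] eta K0 by (simp add: mult_mono)
    finally have n1: "norm (mat 1 - \<eta> *\<^sub>R B z) \<le> norm (mat 1 :: real^'d^'d) + E * K" .
    have "norm ((mat 1 - \<eta> *\<^sub>R B z) *v u) \<le> real CARD('d) * norm (mat 1 - \<eta> *\<^sub>R B z) * norm u"
      by (rule norm_mv_le)
    also have "\<dots> \<le> C0" unfolding C0_def
      by (intro mult_right_mono mult_left_mono n1) auto
    finally have "norm ((mat 1 - \<eta> *\<^sub>R B z) *v u) \<le> C0" .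
    then show ?thesis unfolding f_def using p by (simp add: powr_mono2)
  qed
  have fi: "integrable Q f"
    by (rule integrable_const_bound[where B="C0 powr p"]) (use fb fm in auto)
  have f0: "\<And>z. 0 \<le> f z" unfolding f_def by simp
  have I0: "0 \<le> integral\<^sup>L Q f" using f0 by simp
  have eqn: "(\<integral>\<^sup>+z. ennreal (f z) \<partial>Q) = ennreal (integral\<^sup>L Q f)"
    by (rule nn_integral_eq_integral[OF fi]) (simp add: f0)
  have "integral\<^sup>L Q f = (integral\<^sup>L Q f powr (1/p)) powr p"
    using I0 p by (simp add: powr_powr)
  also have "\<dots> \<le> (c * norm u) powr p"
    using le p by (intro powr_mono2) (auto simp: f_def)
  also have "\<dots> = c powr p * norm u powr p"
    using c by (simp add: powr_mult)
  finally have "integral\<^sup>L Q f \<le> c powr p * norm u powr p" .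
  then have "ennreal (integral\<^sup>L Q f) \<le> ennreal (c powr p) * ennreal (norm u powr p)"
    by (simp add: ennreal_mult[symmetric] ennreal_leI)
  then show ?thesis using eqn unfolding f_def by simp
qed

lemma step_le:
  fixes Q :: "'z measure" and B :: "'z \<Rightarrow> real^'d^'d"
  assumes Q: "prob_space Q" and Bm: "B \<in> borel_measurable Q"
    and Bb: "\<And>z. z \<in> space Q \<Longrightarrow> norm (B z) \<le> K" and K0: "K \<ge> 0"
    and p: "p \<ge> 1" and a: "a > 0" and ei: "\<eta>inf > 0" "\<eta>inf * a \<le> 1/2"
    and A1: "\<And>\<eta>' u. 0 < \<eta>' \<Longrightarrow> \<eta>' < \<eta>inf \<Longrightarrow>
               (\<integral>z. norm ((mat 1 - \<eta>' *\<^sub>R B z) *v u) powr p \<partial>Q) powr (1 / p)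
                 \<le> (1 - \<eta>' * a) * norm u"
    and eta: "0 < \<eta>" "\<eta> \<le> \<eta>inf"
  shows "(\<integral>\<^sup>+z. ennreal (norm ((mat 1 - \<eta> *\<^sub>R B z) *v u) powr p) \<partial>Q)
           \<le> ennreal ((1 - \<eta> * a) powr p) * ennreal (norm u powr p)"
proof (cases "\<eta> < \<eta>inf")
  case True
  have "\<eta> * a \<le> \<eta>inf * a" using eta a by simp
  then have c: "1 - \<eta> * a \<ge> 0" using ei by simp
  show ?thesis
    by (rule step_lt[OF Q Bm Bb p eta(1) _ K0 A1[OF eta(1) True] c]) (use eta in auto)
next
  case False
  then have eq: "\<eta> = \<eta>inf" using eta by simp
  define e where "e = (\<lambda>n::nat. \<eta>inf * (1 - 1 / (real n + 2)))"
  have e0: "0 < e n" for n unfolding e_def using ei by (simp add: field_simps add_pos_nonneg)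
  have e1: "e n < \<eta>inf" for n unfolding e_def using ei by (simp add: field_simps)
  have el: "e \<longlonglongrightarrow> \<eta>inf"
  proof -
    have "(\<lambda>n::nat. 1 / (real n + 2)) \<longlonglongrightarrow> 0" by real_asymp
    then have "(\<lambda>n. \<eta>inf * (1 - 1 / (real n + 2))) \<longlonglongrightarrow> \<eta>inf * (1 - 0)"
      by (intro tendsto_intros)
    then show ?thesis unfolding e_def by simp
  qed
  define g where "g = (\<lambda>n z. ennreal (norm ((mat 1 - e n *\<^sub>R B z) *v u) powr p))"
  define f where "f = (\<lambda>z. ennreal (norm ((mat 1 - \<eta>inf *\<^sub>R B z) *v u) powr p))"
  have gm: "g n \<in> borel_measurable Q" for n unfolding g_def using Bm by measurable
  have gl: "(\<lambda>n. g n z) \<longlonglongrightarrow> f z" for z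
    unfolding g_def f_def using p
    by (intro tendsto_ennrealI tendsto_intros el) auto
  have "(\<integral>\<^sup>+z. f z \<partial>Q) = (\<integral>\<^sup>+z. liminf (\<lambda>n. g n z) \<partial>Q)"
    using gl by (intro nn_integral_cong) (metis lim_imp_Liminf trivial_limit_sequentially)
  also have "\<dots> \<le> liminf (\<lambda>n. integral\<^sup>N Q (g n))"
    by (rule nn_integral_liminf) (rule gm)
  also have "\<dots> \<le> liminf (\<lambda>n. ennreal ((1 - e n * a) powr p) * ennreal (norm u powr p))"
  proof (rule Liminf_mono, rule always_eventually, rule allI)
    fix n
    have "e n * a \<le> \<eta>inf * a" using e1[of n] a by simp
    then have c: "1 - e n * a \<ge> 0" using ei by simp
    show "integral\<^sup>N Q (g n) \<le> ennreal ((1 - e n * a) powr p) * ennreal (norm u powr p)"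
      unfolding g_def
      by (rule step_lt[OF Q Bm Bb p e0[of n] _ K0 A1[OF e0 e1] c]) (use e1[of n] in auto)
  qed
  also have "\<dots> = ennreal ((1 - \<eta>inf * a) powr p) * ennreal (norm u powr p)"
  proof -
    have c: "1 - \<eta>inf * a \<noteq> 0" using ei by simp
    have "(\<lambda>n. ennreal ((1 - e n * a) powr p) * ennreal (norm u powr p))
           \<longlonglongrightarrow> ennreal ((1 - \<eta>inf * a) powr p) * ennreal (norm u powr p)"
      using c by (intro tendsto_intros tendsto_ennrealI el) auto
    then show ?thesis by (simp add: lim_imp_Liminf)
  qed
  finally show ?thesis unfolding f_def eq .
qed

lemma powr_le_self: "0 \<le> (t::real) \<Longrightarrow> t \<le> 1 \<Longrightarrow> p \<ge> 1 \<Longrightarrow> t powr p \<le> t"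
  using powr_mono'[of 1 p t] by (cases "t = 0") auto

lemma convex_powr0: assumes "p \<ge> 1" shows "convex_on {0..} (\<lambda>x::real. x powr p)"
proof (rule convex_onI)
  fix t x y :: real assume t: "0 < t" "t < 1" and x: "x \<in> {0..}" and y: "y \<in> {0..}"
  show "((1 - t) *\<^sub>R x + t *\<^sub>R y) powr p \<le> (1 - t) * x powr p + t * y powr p"
  proof (cases "x = 0 \<or> y = 0")
    case True
    then show ?thesis
    proof
      assume x0: "x = 0"
      have "(t * y) powr p = t powr p * y powr p" using t y by (simp add: powr_mult)
      also have "\<dots> \<le> t * y powr p" using powr_le_self[of t p] t assms by (simp add: mult_right_mono)
      finally show ?thesis using x0 by simp
    next
      assume y0: "y = 0"
      have "((1 - t) * x) powr p = (1 - t) powr p * x powr p" using t x by (simp add: powr_mult)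
      also have "\<dots> \<le> (1 - t) * x powr p" using powr_le_self[of "1 - t" p] t assms by (simp add: mult_right_mono)
      finally show ?thesis using y0 by simp
    qed
  next
    case False
    then have "x \<in> {0<..}" "y \<in> {0<..}" using x y by auto
    then show ?thesis using convex_onD[OF powr_convex[OF assms], of t x y] t by simp
  qed
qed (simp add: convex_real_interval)

lemma avg_powr:
  fixes x :: "nat \<Rightarrow> real^'d"
  assumes p: "p \<ge> 1" and N: "N > 0"
  shows "norm ((1 / real N) *\<^sub>R (\<Sum>c<N. x c)) powr p \<le> (\<Sum>c<N. (1 / real N) * norm (x c) powr p)"
proof -
  have "norm ((1 / real N) *\<^sub>R (\<Sum>c<N. x c)) \<le> (\<Sum>c<N. (1 / real N) *\<^sub>R norm (x c))"
    using divide_right_mono[OF norm_sum[of x "{..<N}"], of "real N"]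
    by (simp add: sum_divide_distrib[symmetric])
  then have "norm ((1 / real N) *\<^sub>R (\<Sum>c<N. x c)) powr p \<le> (\<Sum>c<N. (1 / real N) *\<^sub>R norm (x c)) powr p"
    using p by (intro powr_mono2) auto
  also have "\<dots> \<le> (\<Sum>c<N. (1 / real N) * norm (x c) powr p)"
    by (rule convex_on_sum[OF _ _ convex_powr0[OF p]]) (use N in auto)
  finally show ?thesis .
qed

lemma ordprod_cong: "(\<And>h. 1 \<le> h \<Longrightarrow> h \<le> k \<Longrightarrow> f h = g h) \<Longrightarrow> ordprod k f = ordprod k g"
  by (induction k) auto

lemma ordprod_meas:
  fixes f :: "nat \<Rightarrow> 'a \<Rightarrow> real^'d^'d"
  shows "(\<And>h. 1 \<le> h \<Longrightarrow> h \<le> k \<Longrightarrow> f h \<in> borel_measurable M) \<Longrightarrow> (\<lambda>x. ordprod k (\<lambda>h. f h x)) \<in> borel_measurable M"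
proof (induction k)
  case 0 then show ?case by simp
next
  case (Suc k)
  then show ?case by (simp add: meas_mm)
qed

lemma sum_mv: "(\<Sum>c\<in>S. (f c :: real^'n^'m)) *v v = (\<Sum>c\<in>S. f c *v v)"
  by (induction S rule: infinite_finite_induct) (auto simp: matrix_vector_mult_add_rdistrib)

lemma pow_powr: "0 \<le> (x::real) \<Longrightarrow> (x powr p) ^ n = (x ^ n) powr p"
  by (induction n) (auto simp: powr_mult)

lemma prod_powr: "(\<And>i. i \<in> S \<Longrightarrow> 0 \<le> (f i::real)) \<Longrightarrow> (\<Prod>i\<in>S. f i powr p) = (\<Prod>i\<in>S. f i) powr p"
  by (induction S rule: infinite_finite_induct) (auto simp: powr_mult prod_nonneg)

theorem lemma6:
  fixes N :: nat
    and Zsp :: "'z measure"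
    and \<pi> :: "nat \<Rightarrow> 'z measure"
    and A :: "nat \<Rightarrow> 'z \<Rightarrow> real^'d^'d"
    and b :: "nat \<Rightarrow> 'z \<Rightarrow> real^'d"
    and \<theta>star :: "real^'d"
    and \<theta>c :: "nat \<Rightarrow> real^'d"
    and a \<eta>inf p :: real
    and M :: "'w measure"
    and Z :: "nat \<Rightarrow> nat \<Rightarrow> nat \<Rightarrow> 'w \<Rightarrow> 'z"
    and H :: "nat \<Rightarrow> nat"
    and \<eta> :: "nat \<Rightarrow> real"
    and \<theta>0 :: "real^'d"
    and t :: nat
  defines "Abar \<equiv> \<lambda>c. \<integral>z. A c z \<partial>\<pi> c"
    and "bbar \<equiv> \<lambda>c. \<integral>z. b c z \<partial>\<pi> c"
  assumes N_pos: "N > 0"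
    and pi_prob: "\<And>c. c < N \<Longrightarrow> prob_space (\<pi> c)"
    and pi_sets: "\<And>c. c < N \<Longrightarrow> sets (\<pi> c) = sets Zsp"
    and A_meas: "\<And>c. c < N \<Longrightarrow> A c \<in> borel_measurable Zsp"
    and b_meas: "\<And>c. c < N \<Longrightarrow> b c \<in> borel_measurable Zsp"
    and theta_star: "((1 / real N) *\<^sub>R (\<Sum>c<N. Abar c)) *v \<theta>star = (1 / real N) *\<^sub>R (\<Sum>c<N. bbar c)"
    and theta_c: "\<And>c. c < N \<Longrightarrow> Abar c *v \<theta>c c = bbar c"
    \<comment> \<open>Assumption A1(p)\<close>
    and p_ge: "p \<ge> 1"
    and hurw: "\<And>c. c < N \<Longrightarrow> hurwitz (- Abar c)"
    and a_pos: "a > 0" and etainf_pos: "\<eta>inf > 0" and etainf_a: "\<eta>inf * a \<le> 1/2"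
    and A1: "\<And>c \<eta>' u. c < N \<Longrightarrow> 0 < \<eta>' \<Longrightarrow> \<eta>' < \<eta>inf \<Longrightarrow>
               (\<integral>z. norm ((mat 1 - \<eta>' *\<^sub>R A c z) *v u) powr p \<partial>\<pi> c) powr (1 / p)
                 \<le> (1 - \<eta>' * a) * norm u"
    \<comment> \<open>Assumption A2\<close>
    and M_prob: "prob_space M"
    and Z_indep: "prob_space.indep_vars M (\<lambda>(c, s, h). \<pi> c) (\<lambda>(c, s, h). Z c s h)
                    {(c, s, h). c < N \<and> 1 \<le> s \<and> 1 \<le> h \<and> h \<le> H s}"
    and Z_distr: "\<And>c s h. c < N \<Longrightarrow> 1 \<le> s \<Longrightarrow> 1 \<le> h \<Longrightarrow> h \<le> H s \<Longrightarrow>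
                    distr M (\<pi> c) (Z c s h) = \<pi> c"
    and eps_bdd: "\<exists>K. \<forall>c<N. \<forall>z\<in>space Zsp.
                    norm ((A c z - Abar c) *v \<theta>c c - (b c z - bbar c)) \<le> K"
    and A_bdd: "\<exists>K. \<forall>c<N. \<forall>z\<in>space Zsp. norm (A c z) \<le> K \<and> norm (A c z - Abar c) \<le> K"
    \<comment> \<open>step sizes\<close>
    and eta_rng: "\<And>s. 1 \<le> s \<Longrightarrow> 0 < \<eta> s \<and> \<eta> s \<le> \<eta>inf"
    and t_ge: "t \<ge> 1"
  shows "(\<integral>\<omega>. norm (ordprod t (\<lambda>s. Gamma_avg N \<eta> H A Z s \<omega>) *v (\<theta>0 - \<theta>star)) powr p \<partial>M)
            powr (1 / p)
         \<le> exp (- a * (\<Sum>s = 1..t. \<eta> s * real (H s))) * norm (\<theta>0 - \<theta>star)"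
proof -
  interpret P: prob_space M by (rule M_prob)
  define I where "I = {(c, s, h). c < N \<and> 1 \<le> s \<and> 1 \<le> h \<and> h \<le> H s}"
  define M' where "M' = (\<lambda>(c::nat, s::nat, h::nat). \<pi> c)"
  define Zf where "Zf = (\<lambda>(c::nat, s::nat, h::nat). Z c s h)"
  have ind: "P.indep_vars M' Zf I" using Z_indep unfolding I_def M'_def Zf_def .
  have Zm: "Z c s h \<in> measurable M (\<pi> c)" if "c < N" "1 \<le> s" "1 \<le> h" "h \<le> H s" for c s h
  proof -
    have "(c, s, h) \<in> I" using that by (simp add: I_def)
    then have "Zf (c, s, h) \<in> measurable M (M' (c, s, h))"
      using ind by (auto simp: P.indep_vars_def)
    then show ?thesis by (simp add: Zf_def M'_def)
  qed
  have spc: "space (\<pi> c) = space Zsp" if "c < N" for c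
    using pi_sets[OF that] by (rule sets_eq_imp_space_eq)
  have Am: "A c \<in> borel_measurable (\<pi> c)" if "c < N" for c
    using A_meas[OF that] measurable_cong_sets[OF pi_sets[OF that] refl] by blast
  obtain K where K: "\<forall>c<N. \<forall>z\<in>space Zsp. norm (A c z) \<le> K \<and> norm (A c z - Abar c) \<le> K"
    using A_bdd by blast
  define K0 where "K0 = max K 0"
  have K0: "K0 \<ge> 0" "\<And>c z. c < N \<Longrightarrow> z \<in> space (\<pi> c) \<Longrightarrow> norm (A c z) \<le> K0"
    using K spc unfolding K0_def by force+
  have SB: "(\<integral>\<^sup>+z. ennreal (norm ((mat 1 - e *\<^sub>R A c z) *v u) powr p) \<partial>\<pi> c)
              \<le> ennreal ((1 - e * a) powr p) * ennreal (norm u powr p)"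
    if "c < N" "0 < e" "e \<le> \<eta>inf" for c e u
    by (rule step_le[OF pi_prob[OF that(1)] Am[OF that(1)] K0(2)[OF that(1)] K0(1) p_ge a_pos etainf_pos etainf_a
          A1[OF that(1)] that(2,3)])
  have SBM: "(\<integral>\<^sup>+\<omega>. ennreal (norm ((mat 1 - \<eta> s *\<^sub>R A c (Z c s h \<omega>)) *v u) powr p) \<partial>M)
              \<le> ennreal ((1 - \<eta> s * a) powr p) * ennreal (norm u powr p)"
    if "c < N" "1 \<le> s" "1 \<le> h" "h \<le> H s" for c s h u
  proof -
    have "(\<integral>\<^sup>+\<omega>. ennreal (norm ((mat 1 - \<eta> s *\<^sub>R A c (Z c s h \<omega>)) *v u) powr p) \<partial>M)
        = (\<integral>\<^sup>+z. ennreal (norm ((mat 1 - \<eta> s *\<^sub>R A c z) *v u) powr p) \<partial>distr M (\<pi> c) (Z c s h))"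
      by (rule nn_integral_distr[symmetric]) (use Zm[OF that] Am[OF that(1)] in measurable)
    also have "\<dots> = (\<integral>\<^sup>+z. ennreal (norm ((mat 1 - \<eta> s *\<^sub>R A c z) *v u) powr p) \<partial>\<pi> c)"
      using Z_distr[OF that] by simp
    also have "\<dots> \<le> ennreal ((1 - \<eta> s * a) powr p) * ennreal (norm u powr p)"
      using SB[OF that(1)] eta_rng[OF that(2)] by blast
    finally show ?thesis .
  qed
  have WR: "(\<integral>\<^sup>+\<omega>. ennreal (norm (ordprod k (\<lambda>h. mat 1 - \<eta> s *\<^sub>R A c (Z c s h \<omega>)) *v y) powr p) \<partial>M)
              \<le> ennreal (((1 - \<eta> s * a) powr p) ^ k) * ennreal (norm y powr p)"
    if cs: "c < N" "1 \<le> s" and kH: "k \<le> H s" for c s k y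
    using kH
  proof (induction k)
    case 0
    then show ?case by (simp add: P.emeasure_space_1)
  next
    case (Suc k)
    define r where "r = (1 - \<eta> s * a) powr p"
    have r0: "r \<ge> 0" unfolding r_def by simp
    define i0 where "i0 = (c, s, Suc k)"
    define J where "J = {(c', s', h). c' = c \<and> s' = s \<and> 1 \<le> h \<and> h \<le> k}"
    have i0I: "i0 \<in> I" using cs Suc.prems by (simp add: i0_def I_def)
    have JI: "J \<subseteq> I" using cs Suc.prems by (auto simp: J_def I_def)
    have indJ: "P.indep_var (PiM {i0} M') (\<lambda>\<omega>. restrict (\<lambda>i. Zf i \<omega>) {i0})
                  (PiM J M') (\<lambda>\<omega>. restrict (\<lambda>i. Zf i \<omega>) J)"
      by (rule P.indep_var_restrict[OF ind]) (use i0I JI in \<open>auto simp: J_def i0_def\<close>)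
    define G' where "G' = (\<lambda>x. mat 1 - \<eta> s *\<^sub>R A c (x i0) :: real^'d^'d)"
    define F' where "F' = (\<lambda>x. ordprod k (\<lambda>h. mat 1 - \<eta> s *\<^sub>R A c (x (c, s, h))) *v y)"
    have ev0: "(\<lambda>x. x i0) \<in> measurable (PiM {i0} M') (\<pi> c)"
      using measurable_component_singleton[of i0 "{i0}" M'] by (simp add: M'_def i0_def)
    have G'm: "G' \<in> borel_measurable (PiM {i0} M')"
      unfolding G'_def using ev0 Am[OF cs(1)] by measurable
    have F'm: "F' \<in> borel_measurable (PiM J M')"
      unfolding F'_def
    proof (intro meas_mv ordprod_meas)
      fix h assume h: "1 \<le> h" "h \<le> k"
      have "(\<lambda>x. x (c, s, h)) \<in> measurable (PiM J M') (\<pi> c)"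
        using measurable_component_singleton[of "(c, s, h)" J M'] h by (simp add: M'_def J_def)
      then show "(\<lambda>x. mat 1 - \<eta> s *\<^sub>R A c (x (c, s, h))) \<in> borel_measurable (PiM J M')"
        using Am[OF cs(1)] by measurable
    qed simp
    have bnd: "(\<integral>\<^sup>+\<omega>. ennreal (norm (G' (restrict (\<lambda>i. Zf i \<omega>) {i0}) *v u) powr p) \<partial>M)
                \<le> ennreal r * ennreal (norm u powr p)" for u
      using SBM[OF cs, of "Suc k" u] Suc.prems by (simp add: G'_def i0_def Zf_def r_def)
    have KLr: "(\<integral>\<^sup>+\<omega>. ennreal (norm (G' (restrict (\<lambda>i. Zf i \<omega>) {i0}) *v F' (restrict (\<lambda>i. Zf i \<omega>) J)) powr p) \<partial>M)
        \<le> ennreal r * (\<integral>\<^sup>+\<omega>. ennreal (norm (F' (restrict (\<lambda>i. Zf i \<omega>) J)) powr p) \<partial>M)"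
      apply (rule KL[OF M_prob indJ])
      apply (rule G'm)
      apply (rule F'm)
      apply (rule bnd)
      done
    have eqF: "F' (restrict (\<lambda>i. Zf i \<omega>) J) = ordprod k (\<lambda>h. mat 1 - \<eta> s *\<^sub>R A c (Z c s h \<omega>)) *v y" for \<omega>
      unfolding F'_def by (intro arg_cong[where f="\<lambda>m. m *v y"] ordprod_cong) (simp add: J_def Zf_def)
    have eqG: "G' (restrict (\<lambda>i. Zf i \<omega>) {i0}) *v (ordprod k (\<lambda>h. mat 1 - \<eta> s *\<^sub>R A c (Z c s h \<omega>)) *v y)
        = ordprod (Suc k) (\<lambda>h. mat 1 - \<eta> s *\<^sub>R A c (Z c s h \<omega>)) *v y" for \<omega>
      by (simp add: G'_def i0_def Zf_def matrix_vector_mul_assoc)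
    have "(\<integral>\<^sup>+\<omega>. ennreal (norm (ordprod (Suc k) (\<lambda>h. mat 1 - \<eta> s *\<^sub>R A c (Z c s h \<omega>)) *v y) powr p) \<partial>M)
        \<le> ennreal r * (\<integral>\<^sup>+\<omega>. ennreal (norm (ordprod k (\<lambda>h. mat 1 - \<eta> s *\<^sub>R A c (Z c s h \<omega>)) *v y) powr p) \<partial>M)"
      using KLr unfolding eqF eqG .
    also have "\<dots> \<le> ennreal r * (ennreal (r ^ k) * ennreal (norm y powr p))"
      using Suc.IH Suc.prems by (intro mult_left_mono) (auto simp: r_def)
    also have "\<dots> = ennreal (r ^ Suc k) * ennreal (norm y powr p)"
      using r0 by (simp add: ennreal_mult' mult.assoc)
    finally show ?case unfolding r_def .
  qed
  define Gav where "Gav = (\<lambda>s (x :: nat \<times> nat \<times> nat \<Rightarrow> 'z).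
      (1 / real N) *\<^sub>R (\<Sum>c<N. ordprod (H s) (\<lambda>h. mat 1 - \<eta> s *\<^sub>R A c (x (c, s, h)))) :: real^'d^'d)"
  have GavE: "Gamma_avg N \<eta> H A Z s \<omega> = Gav s (\<lambda>i. Zf i \<omega>)" for s \<omega>
    by (simp add: Gamma_avg_def Gamma_loc_def Gav_def Zf_def)
  have Gav_cong: "Gav s x = Gav s x'" if "\<And>c h. c < N \<Longrightarrow> 1 \<le> h \<Longrightarrow> h \<le> H s \<Longrightarrow> x (c, s, h) = x' (c, s, h)" for s x x'
    unfolding Gav_def using that by (intro arg_cong[where f="\<lambda>m. (1 / real N) *\<^sub>R m"] sum.cong ordprod_cong) auto
  have Gav_meas: "Gav s \<in> borel_measurable (PiM L M')"
    if L: "\<And>c h. c < N \<Longrightarrow> 1 \<le> h \<Longrightarrow> h \<le> H s \<Longrightarrow> (c, s, h) \<in> L" for s L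
    unfolding Gav_def
  proof (intro borel_measurable_scaleR borel_measurable_const borel_measurable_sum ordprod_meas)
    fix c h assume c: "c \<in> {..<N}" and h: "1 \<le> h" "h \<le> H s"
    have cN: "c < N" using c by simp
    have "(\<lambda>x. x (c, s, h)) \<in> measurable (PiM L M') (\<pi> c)"
      using measurable_component_singleton[of "(c, s, h)" L M'] L[OF cN h] by (simp add: M'_def)
    then show "(\<lambda>x. mat 1 - \<eta> s *\<^sub>R A c (x (c, s, h))) \<in> borel_measurable (PiM L M')"
      using Am[OF cN] by measurable
  qed
  have RB: "(\<integral>\<^sup>+\<omega>. ennreal (norm (Gamma_avg N \<eta> H A Z s \<omega> *v y) powr p) \<partial>M)
              \<le> ennreal (((1 - \<eta> s * a) powr p) ^ H s) * ennreal (norm y powr p)"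
    if s: "1 \<le> s" for s y
  proof -
    define L where "L = (\<lambda>c \<omega>. ordprod (H s) (\<lambda>h. mat 1 - \<eta> s *\<^sub>R A c (Z c s h \<omega>)))"
    define R where "R = ennreal (((1 - \<eta> s * a) powr p) ^ H s) * ennreal (norm y powr p)"
    have Lm: "(\<lambda>\<omega>. ennreal (norm (L c \<omega> *v y) powr p)) \<in> borel_measurable M" if c: "c < N" for c
    proof -
      have "(\<lambda>\<omega>. L c \<omega>) \<in> borel_measurable M"
        unfolding L_def
      proof (rule ordprod_meas)
        fix h assume h: "1 \<le> h" "h \<le> H s"
        show "(\<lambda>\<omega>. mat 1 - \<eta> s *\<^sub>R A c (Z c s h \<omega>)) \<in> borel_measurable M"
          using Zm[OF c s h] Am[OF c] by measurable
      qed
      then show ?thesis by measurable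
    qed
    have pw: "ennreal (norm (Gamma_avg N \<eta> H A Z s \<omega> *v y) powr p)
              \<le> (\<Sum>c<N. ennreal (1 / real N) * ennreal (norm (L c \<omega> *v y) powr p))" for \<omega>
    proof -
      have "Gamma_avg N \<eta> H A Z s \<omega> *v y = (1 / real N) *\<^sub>R (\<Sum>c<N. L c \<omega> *v y)"
        by (simp add: Gamma_avg_def Gamma_loc_def L_def scaleR_matrix_vector_assoc[symmetric] sum_mv)
      then have "norm (Gamma_avg N \<eta> H A Z s \<omega> *v y) powr p \<le> (\<Sum>c<N. (1 / real N) * norm (L c \<omega> *v y) powr p)"
        using avg_powr[OF p_ge N_pos] by simp
      then show ?thesis
        by (simp add: ennreal_mult[symmetric] ennreal_leI)
    qed
    have "(\<integral>\<^sup>+\<omega>. ennreal (norm (Gamma_avg N \<eta> H A Z s \<omega> *v y) powr p) \<partial>M)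
        \<le> (\<integral>\<^sup>+\<omega>. (\<Sum>c<N. ennreal (1 / real N) * ennreal (norm (L c \<omega> *v y) powr p)) \<partial>M)"
      by (rule nn_integral_mono) (rule pw)
    also have "\<dots> = (\<Sum>c<N. ennreal (1 / real N) * (\<integral>\<^sup>+\<omega>. ennreal (norm (L c \<omega> *v y) powr p) \<partial>M))"
    proof -
      have "(\<integral>\<^sup>+\<omega>. (\<Sum>c<N. ennreal (1 / real N) * ennreal (norm (L c \<omega> *v y) powr p)) \<partial>M)
          = (\<Sum>c<N. (\<integral>\<^sup>+\<omega>. ennreal (1 / real N) * ennreal (norm (L c \<omega> *v y) powr p) \<partial>M))"
        by (rule nn_integral_sum) (use Lm in \<open>auto intro!: borel_measurable_times_ennreal\<close>)
      also have "\<dots> = (\<Sum>c<N. ennreal (1 / real N) * (\<integral>\<^sup>+\<omega>. ennreal (norm (L c \<omega> *v y) powr p) \<partial>M))"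
        by (rule sum.cong[OF refl], rule nn_integral_cmult) (use Lm in auto)
      finally show ?thesis .
    qed
    also have "\<dots> \<le> (\<Sum>c<N. ennreal (1 / real N) * R)"
      unfolding R_def L_def using WR[OF _ s order.refl] by (intro sum_mono mult_left_mono) auto
    also have "\<dots> = R"
    proof -
      have "of_nat N * ennreal (1 / real N) = ennreal (real N) * ennreal (1 / real N)"
        by (simp add: ennreal_of_nat_eq_real_of_nat)
      also have "\<dots> = ennreal (real N * (1 / real N))"
        by (rule ennreal_mult[symmetric]) auto
      also have "\<dots> = 1" using N_pos by simp
      finally show ?thesis by (simp add: mult.assoc[symmetric])
    qed
    finally show ?thesis unfolding R_def .
  qed
  define v0 where "v0 = \<theta>0 - \<theta>star"
  define q where "q = (\<lambda>s. (1 - \<eta> s * a) powr p)"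
  have FI: "(\<integral>\<^sup>+\<omega>. ennreal (norm (ordprod k (\<lambda>s. Gamma_avg N \<eta> H A Z s \<omega>) *v v0) powr p) \<partial>M)
              \<le> ennreal (\<Prod>s\<in>{1..k}. q s ^ H s) * ennreal (norm v0 powr p)" for k
  proof (induction k)
    case 0
    then show ?case by (simp add: P.emeasure_space_1)
  next
    case (Suc k)
    define B where "B = {(c, s, h). c < N \<and> s = Suc k \<and> 1 \<le> h \<and> h \<le> H s}"
    define J where "J = {(c, s, h). c < N \<and> 1 \<le> s \<and> s \<le> k \<and> 1 \<le> h \<and> h \<le> H s}"
    have BI: "B \<subseteq> I" by (auto simp: B_def I_def)
    have JI: "J \<subseteq> I" by (auto simp: J_def I_def)
    have indJ: "P.indep_var (PiM B M') (\<lambda>\<omega>. restrict (\<lambda>i. Zf i \<omega>) B)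
                  (PiM J M') (\<lambda>\<omega>. restrict (\<lambda>i. Zf i \<omega>) J)"
      by (rule P.indep_var_restrict[OF ind]) (use BI JI in \<open>auto simp: J_def B_def\<close>)
    define G' where "G' = Gav (Suc k)"
    define F' where "F' = (\<lambda>x. ordprod k (\<lambda>s. Gav s x) *v v0)"
    have G'm: "G' \<in> borel_measurable (PiM B M')"
      unfolding G'_def by (rule Gav_meas) (auto simp: B_def)
    have F'm: "F' \<in> borel_measurable (PiM J M')"
      unfolding F'_def
      by (intro meas_mv ordprod_meas borel_measurable_const Gav_meas) (auto simp: J_def)
    have eqG0: "G' (restrict (\<lambda>i. Zf i \<omega>) B) = Gamma_avg N \<eta> H A Z (Suc k) \<omega>" for \<omega>
      unfolding G'_def GavE by (rule Gav_cong) (auto simp: B_def)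
    have bnd: "(\<integral>\<^sup>+\<omega>. ennreal (norm (G' (restrict (\<lambda>i. Zf i \<omega>) B) *v u) powr p) \<partial>M)
                \<le> ennreal (q (Suc k) ^ H (Suc k)) * ennreal (norm u powr p)" for u
      unfolding eqG0 q_def by (rule RB) simp
    have KLr: "(\<integral>\<^sup>+\<omega>. ennreal (norm (G' (restrict (\<lambda>i. Zf i \<omega>) B) *v F' (restrict (\<lambda>i. Zf i \<omega>) J)) powr p) \<partial>M)
        \<le> ennreal (q (Suc k) ^ H (Suc k)) * (\<integral>\<^sup>+\<omega>. ennreal (norm (F' (restrict (\<lambda>i. Zf i \<omega>) J)) powr p) \<partial>M)"
      apply (rule KL[OF M_prob indJ])
        apply (rule G'm)
       apply (rule F'm)
      apply (rule bnd)
      done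
    have eqF: "F' (restrict (\<lambda>i. Zf i \<omega>) J) = ordprod k (\<lambda>s. Gamma_avg N \<eta> H A Z s \<omega>) *v v0" for \<omega>
      unfolding F'_def GavE
      by (intro arg_cong[where f="\<lambda>m. m *v v0"] ordprod_cong Gav_cong) (auto simp: J_def)
    have eqG: "G' (restrict (\<lambda>i. Zf i \<omega>) B) *v (ordprod k (\<lambda>s. Gamma_avg N \<eta> H A Z s \<omega>) *v v0)
        = ordprod (Suc k) (\<lambda>s. Gamma_avg N \<eta> H A Z s \<omega>) *v v0" for \<omega>
      by (simp add: eqG0 matrix_vector_mul_assoc)
    have q0: "0 \<le> q s" for s by (simp add: q_def)
    have "(\<integral>\<^sup>+\<omega>. ennreal (norm (ordprod (Suc k) (\<lambda>s. Gamma_avg N \<eta> H A Z s \<omega>) *v v0) powr p) \<partial>M)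
        \<le> ennreal (q (Suc k) ^ H (Suc k)) * (\<integral>\<^sup>+\<omega>. ennreal (norm (ordprod k (\<lambda>s. Gamma_avg N \<eta> H A Z s \<omega>) *v v0) powr p) \<partial>M)"
      using KLr unfolding eqF eqG .
    also have "\<dots> \<le> ennreal (q (Suc k) ^ H (Suc k)) * (ennreal (\<Prod>s\<in>{1..k}. q s ^ H s) * ennreal (norm v0 powr p))"
      using Suc.IH by (intro mult_left_mono) auto
    also have "\<dots> = ennreal (\<Prod>s\<in>{1..Suc k}. q s ^ H s) * ennreal (norm v0 powr p)"
    proof -
      have "(\<Prod>s\<in>{1..Suc k}. q s ^ H s) = (\<Prod>s\<in>{1..k}. q s ^ H s) * q (Suc k) ^ H (Suc k)"
        by simp
      moreover have "0 \<le> (\<Prod>s\<in>{1..k}. q s ^ H s)" using q0 by (simp add: prod_nonneg)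
      moreover have "0 \<le> q (Suc k) ^ H (Suc k)" using q0 by simp
      ultimately show ?thesis
        by (simp add: ennreal_mult mult_ac)
    qed
    finally show ?case .
  qed
  define Q where "Q = (\<Prod>s\<in>{1..t}. (1 - \<eta> s * a) ^ H s)"
  have qa: "0 \<le> 1 - \<eta> s * a" if "1 \<le> s" for s
  proof -
    have "\<eta> s * a \<le> \<eta>inf * a" using eta_rng[OF that] a_pos by simp
    then show ?thesis using etainf_a by simp
  qed
  have Q0: "0 \<le> Q" unfolding Q_def using qa by (auto intro: prod_nonneg)
  have PQ: "(\<Prod>s\<in>{1..t}. q s ^ H s) = Q powr p"
  proof -
    have "(\<Prod>s\<in>{1..t}. q s ^ H s) = (\<Prod>s\<in>{1..t}. ((1 - \<eta> s * a) ^ H s) powr p)"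
      unfolding q_def using qa by (intro prod.cong refl pow_powr) auto
    also have "\<dots> = Q powr p" unfolding Q_def using qa by (intro prod_powr) auto
    finally show ?thesis .
  qed
  have GAm: "(\<lambda>\<omega>. Gamma_avg N \<eta> H A Z s \<omega>) \<in> borel_measurable M" if s: "1 \<le> s" for s
    unfolding Gamma_avg_def Gamma_loc_def
  proof (intro borel_measurable_scaleR borel_measurable_const borel_measurable_sum ordprod_meas)
    fix c h assume c: "c \<in> {..<N}" and h: "1 \<le> h" "h \<le> H s"
    have cN: "c < N" using c by simp
    show "(\<lambda>\<omega>. mat 1 - \<eta> s *\<^sub>R A c (Z c s h \<omega>)) \<in> borel_measurable M"
      using Zm[OF cN s h] Am[OF cN] by measurable
  qed
  have fm: "(\<lambda>\<omega>. norm (ordprod t (\<lambda>s. Gamma_avg N \<eta> H A Z s \<omega>) *v v0) powr p) \<in> borel_measurable M"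
  proof -
    have "(\<lambda>\<omega>. ordprod t (\<lambda>s. Gamma_avg N \<eta> H A Z s \<omega>)) \<in> borel_measurable M"
      by (rule ordprod_meas) (rule GAm)
    then show ?thesis by measurable
  qed
  define E where "E = (\<integral>\<omega>. norm (ordprod t (\<lambda>s. Gamma_avg N \<eta> H A Z s \<omega>) *v v0) powr p \<partial>M)"
  have E0: "0 \<le> E" unfolding E_def by simp
  have "E = enn2real (\<integral>\<^sup>+\<omega>. ennreal (norm (ordprod t (\<lambda>s. Gamma_avg N \<eta> H A Z s \<omega>) *v v0) powr p) \<partial>M)"
    unfolding E_def by (rule integral_eq_nn_integral[OF fm]) simp
  also have "\<dots> \<le> Q powr p * norm v0 powr p"
  proof (rule enn2real_leI)
    show "0 \<le> Q powr p * norm v0 powr p" by simp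
    show "(\<integral>\<^sup>+\<omega>. ennreal (norm (ordprod t (\<lambda>s. Gamma_avg N \<eta> H A Z s \<omega>) *v v0) powr p) \<partial>M)
        \<le> ennreal (Q powr p * norm v0 powr p)"
      using FI[of t] unfolding PQ by (simp add: ennreal_mult)
  qed
  finally have EQ: "E \<le> (Q * norm v0) powr p" using Q0 by (simp add: powr_mult)
  have p0: "0 < p" using p_ge by simp
  have "E powr (1 / p) \<le> ((Q * norm v0) powr p) powr (1 / p)"
    using EQ E0 p0 by (intro powr_mono2) auto
  also have "\<dots> = Q * norm v0" using Q0 p0 by (simp add: powr_powr)
  also have "\<dots> \<le> exp (- a * (\<Sum>s = 1..t. \<eta> s * real (H s))) * norm v0"
  proof (rule mult_right_mono)
    have "Q \<le> (\<Prod>s\<in>{1..t}. exp (- (\<eta> s * a)) ^ H s)"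
      unfolding Q_def
    proof (rule prod_mono)
      fix s assume "s \<in> {1..t}"
      then have s: "1 \<le> s" by simp
      have "1 - \<eta> s * a \<le> exp (- (\<eta> s * a))" using exp_ge_add_one_self[of "- (\<eta> s * a)"] by simp
      then show "0 \<le> (1 - \<eta> s * a) ^ H s \<and> (1 - \<eta> s * a) ^ H s \<le> exp (- (\<eta> s * a)) ^ H s"
        using qa[OF s] by (auto intro: power_mono)
    qed
    also have "\<dots> = (\<Prod>s\<in>{1..t}. exp (real (H s) * - (\<eta> s * a)))"
      by (intro prod.cong refl) (simp only: exp_of_nat_mult)
    also have "\<dots> = exp (\<Sum>s\<in>{1..t}. real (H s) * - (\<eta> s * a))"
      by (simp add: exp_sum)
    also have "(\<Sum>s\<in>{1..t}. real (H s) * - (\<eta> s * a)) = - a * (\<Sum>s = 1..t. \<eta> s * real (H s))"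
      by (simp add: sum_distrib_left sum_negf[symmetric] mult_ac)
    finally show "Q \<le> exp (- a * (\<Sum>s = 1..t. \<eta> s * real (H s)))" .
  qed simp
  finally show ?thesis unfolding E_def v0_def .
qed

end
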